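(* Let $n\ge1$, $\mathbf{A}=\{a_1,\dots,a_n\}$ and $\mathbf{S}_1^n=\{XX : X\in\mathbf{A}^*,\ X\neq\emptyset\}$. Let $X_1=a_1$, $X_i=X_{i-1}a_iX_{i-1}$ for $2\le i\le n$. Then every minimal crucial word with respect to $\mathbf{S}_1^n$ is obtained from $X_n$ by a permutation of the letters of $\mathbf{A}$; i.e. $X_n$ is the unique minimal crucial word up to renaming of letters.
   Context: A word over $\mathbf{A}$ is a finite sequence of letters; $\mathbf{A}^*$ is the set of all words. A subword is a block of consecutive letters. For $\mathbf{S}\subseteq\mathbf{A}^*$, a word is free from $\mathbf{S}$ if none of its subwords belongs to $\mathbf{S}$. A word $X$ free from $\mathbf{S}$ is crucial with respect to $\mathbf{S}$ if for every letter $a\in\mathbf{A}$ the word $Xa$ contains a subword belonging to $\mathbf{S}$. A minimal crucial word is a crucial word of smallest possible length. *)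

theory Defs
  imports Main
begin

definition subword :: "'a list \<Rightarrow> 'a list \<Rightarrow> bool" where
  "subword Y W \<longleftrightarrow> (\<exists>u v. W = u @ Y @ v)"

definition free_from :: "'a set \<Rightarrow> 'a list set \<Rightarrow> 'a list \<Rightarrow> bool" where
  "free_from A S X \<longleftrightarrow> set X \<subseteq> A \<and> (\<forall>Y. subword Y X \<longrightarrow> Y \<notin> S)"

definition crucial :: "'a set \<Rightarrow> 'a list set \<Rightarrow> 'a list \<Rightarrow> bool" where
  "crucial A S X \<longleftrightarrow> free_from A S X \<and> (\<forall>a\<in>A. \<exists>Y. subword Y (X @ [a]) \<and> Y \<in> S)"

definition minimal_crucial :: "'a set \<Rightarrow> 'a list set \<Rightarrow> 'a list \<Rightarrow> bool" where
  "minimal_crucial A S X \<longleftrightarrow> crucial A S X \<and> (\<forall>Y. crucial A S Y \<longrightarrow> length X \<le> length Y)"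

definition squares :: "'a set \<Rightarrow> 'a list set" where
  "squares A = {X @ X | X. X \<noteq> [] \<and> set X \<subseteq> A}"

fun zimin :: "(nat \<Rightarrow> 'a) \<Rightarrow> nat \<Rightarrow> 'a list" where
  "zimin a 0 = []"
| "zimin a (Suc i) = zimin a i @ [a (Suc i)] @ zimin a i"

end

theory Submission
  imports Defs
begin


definition sqfree :: "'a list \<Rightarrow> bool" where
  "sqfree W \<longleftrightarrow> (\<forall>Y. Y \<noteq> [] \<longrightarrow> \<not> subword (Y @ Y) W)"

lemma suffix_split:
  assumes "xs @ ys = us @ vs" "length ys \<le> length vs"
  shows "\<exists>K. vs = K @ ys"
proof -
  from assms(1) obtain zs where "(xs = us @ zs \<and> zs @ ys = vs) \<or> (xs @ zs = us \<and> ys = zs @ vs)"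
    by (auto simp: append_eq_append_conv2)
  then show ?thesis using assms(2) by auto
qed

lemma key:
  assumes "W = P @ T @ [d] @ T" "W = Q @ Z @ [b] @ Z"
    "length Z < length T" "length T \<le> 2 * length Z"
  shows "\<not> sqfree W"
proof -
  have "(P @ T) @ ([d] @ T) = Q @ (Z @ [b] @ Z)" using assms by simp
  moreover have "length ([d] @ T) \<le> length (Z @ [b] @ Z)" using assms by simp
  ultimately obtain K where K: "Z @ ([b] @ Z) = K @ ([d] @ T)"
    using suffix_split by (metis append.assoc)
  have "length K + length T = 2 * length Z" using arg_cong[OF K, of length] by simp
  then have lK: "length K \<le> length Z" using assms(3) by simp
  obtain us where "(Z = K @ us \<and> us @ ([b] @ Z) = [d] @ T) \<or> (Z @ us = K \<and> [b] @ Z = us @ [d] @ T)"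
    using K by (auto simp: append_eq_append_conv2)
  then have us: "Z = K @ us" "us @ [b] @ Z = [d] @ T"
    using lK assms(3) by auto
  then obtain R where R: "us = d # R" using assms(3)
    by (cases us) auto
  have T: "T = R @ [b] @ K @ [d] @ R" using us R by simp
  have "W = (P @ R @ [b] @ K) @ ((d # R) @ (d # R)) @ ([b] @ K @ [d] @ R)"
    using assms(1) T by simp
  then show ?thesis unfolding sqfree_def subword_def by blast
qed

lemma zimin_len: "length (zimin a k) = 2^k - 1"
proof (induction k)
  case (Suc k)
  have "(1::nat) \<le> 2^k" by simp
  then show ?case using Suc by simp
qed simp

lemma zimin_set: "set (zimin a k) = a ` {1..k}"
proof (induction k)
  case (Suc k)
  have "{1..Suc k} = insert (Suc k) {1..k}" by auto
  then show ?case using Suc by auto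
qed simp

lemma zimin_map: "map f (zimin a k) = zimin (f \<circ> a) k"
  by (induction k) auto

lemma zimin_cong: "(\<And>i. i \<in> {1..k} \<Longrightarrow> f i = g i) \<Longrightarrow> zimin f k = zimin g k"
  by (induction k) auto

lemma zimin_suffix: "i \<le> k \<Longrightarrow> \<exists>u. zimin a k = u @ zimin a i"
proof (induction k)
  case (Suc k)
  show ?case
  proof (cases "i = Suc k")
    case False
    then obtain u where "zimin a k = u @ zimin a i" using Suc by auto
    then show ?thesis by (rule_tac x="zimin a k @ [a (Suc k)] @ u" in exI) simp
  qed auto
qed simp

lemma subword_mid:
  assumes "subword S (L @ [c] @ R)" "c \<notin> set S"
  shows "subword S L \<or> subword S R"
proof -
  obtain u v where uv: "u @ S @ v = L @ [c] @ R" using assms(1) unfolding subword_def by auto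
  show ?thesis
  proof (cases "length u + length S \<le> length L")
    case True
    from uv have "(u @ S) @ v = L @ ([c] @ R)" by simp
    then obtain zs where "(u @ S = L @ zs \<and> zs @ v = [c] @ R) \<or> ((u @ S) @ zs = L \<and> v = zs @ [c] @ R)"
      using append_eq_append_conv2[of "u @ S" v L "[c] @ R"] by blast
    moreover have "u @ S = L @ zs \<Longrightarrow> zs = []"
    proof -
      assume h: "u @ S = L @ zs"
      have "length (u @ S) = length (L @ zs)" using h by simp
      then show "zs = []" using True by simp
    qed
    ultimately have "L = u @ S \<or> L = u @ S @ zs" by auto
    then have "\<exists>K. L = u @ S @ K" by (metis append_Nil2)
    then obtain K where "L = u @ S @ K" by blast
    then show ?thesis unfolding subword_def by blast
  next
    case False
    show ?thesis
    proof (cases "length u \<ge> Suc (length L)")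
      case True
      from uv have "u @ (S @ v) = (L @ [c]) @ R" by simp
      then obtain zs where "(u = (L @ [c]) @ zs \<and> zs @ (S @ v) = R) \<or> (u @ zs = L @ [c] \<and> S @ v = zs @ R)"
        using append_eq_append_conv2[of u "S @ v" "L @ [c]" R] by blast
      moreover have "u @ zs = L @ [c] \<Longrightarrow> zs = []"
      proof -
        assume h: "u @ zs = L @ [c]"
        have "length u + length zs = Suc (length L)" using arg_cong[OF h, of length] by simp
        then have "length zs = 0" using True by linarith
        then show "zs = []" by simp
      qed
      ultimately have "R = zs @ S @ v" by auto
      then show ?thesis unfolding subword_def by blast
    next
      case F2: False
      have "(u @ S @ v) ! length L = c" using uv by (simp add: nth_append)
      moreover have lt: "length L - length u < length S" using F2 False by simp
      moreover have "(u @ S @ v) ! length L = S ! (length L - length u)"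
        using F2 lt by (simp add: nth_append)
      ultimately show ?thesis using assms(2) by (metis nth_mem)
    qed
  qed
qed

lemma sqfree_mid:
  assumes "sqfree L" "c \<notin> set L"
  shows "sqfree (L @ [c] @ L)"
  unfolding sqfree_def
proof (intro allI impI notI)
  fix Y assume Y: "Y \<noteq> []" "subword (Y @ Y) (L @ [c] @ L)"
  show False
  proof (cases "c \<in> set Y")
    case True
    obtain u v where "u @ (Y @ Y) @ v = L @ [c] @ L" using Y(2) unfolding subword_def by auto
    then have "count_list (u @ (Y @ Y) @ v) c = count_list (L @ [c] @ L) c" by simp
    moreover have "count_list Y c \<ge> 1" using True count_list_0_iff[of Y c] by linarith
    ultimately show False using assms(2) by simp
  next
    case False
    then have "c \<notin> set (Y @ Y)" by simp
    then have "subword (Y @ Y) L" using subword_mid[OF Y(2)] by blast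
    then show False using assms(1) Y(1) unfolding sqfree_def by blast
  qed
qed

lemma zimin_sqfree: "inj_on a {1..k} \<Longrightarrow> sqfree (zimin a k)"
proof (induction k)
  case 0
  show ?case unfolding sqfree_def subword_def by auto
next
  case (Suc k)
  have i: "inj_on a {1..k}" using Suc.prems by (rule inj_on_subset) auto
  have "a (Suc k) \<notin> a ` {1..k}"
  proof
    assume "a (Suc k) \<in> a ` {1..k}"
    then obtain x where "x \<in> {1..k}" "a (Suc k) = a x" by auto
    moreover have "x \<in> {1..Suc k}" "Suc k \<in> {1..Suc k}" using calculation by auto
    ultimately have "Suc k = x" using Suc.prems by (metis inj_on_eq_iff)
    then show False using \<open>x \<in> {1..k}\<close> by simp
  qed
  then show ?case using sqfree_mid[OF Suc.IH[OF i]] zimin_set[of a k] by simp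
qed

definition dbl :: "nat set \<Rightarrow> bool" where
  "dbl S \<longleftrightarrow> (\<forall>x\<in>S. \<forall>y\<in>S. x < y \<longrightarrow> 2 * x + 1 \<le> y)"

lemma dbl_lower: "finite S \<Longrightarrow> card S = Suc m \<Longrightarrow> dbl S \<Longrightarrow> 2^m - 1 \<le> Max S"
proof (induction m arbitrary: S)
  case 0
  then show ?case by simp
next
  case (Suc m)
  define S' where "S' = S - {Max S}"
  have ne: "S \<noteq> {}" using Suc.prems by auto
  have MS: "Max S \<in> S" using Max_in[OF Suc.prems(1) ne] .
  have cS': "card S' = Suc m" using Suc.prems MS unfolding S'_def by simp
  have fS': "finite S'" using Suc.prems unfolding S'_def by simp
  have dS': "dbl S'" using Suc.prems(3) unfolding dbl_def S'_def by blast
  have ne': "S' \<noteq> {}" using cS' by auto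
  have M'in: "Max S' \<in> S'" using Max_in[OF fS' ne'] .
  then have "Max S' \<in> S" "Max S' \<noteq> Max S" unfolding S'_def by auto
  moreover have "Max S' \<le> Max S" using \<open>Max S' \<in> S\<close> Suc.prems(1) by simp
  ultimately have lt: "Max S' < Max S" by simp
  have "2 * Max S' + 1 \<le> Max S" using Suc.prems(3) lt MS \<open>Max S' \<in> S\<close> unfolding dbl_def by blast
  moreover have "2^m - 1 \<le> Max S'" using Suc.IH[OF fS' cS' dS'] .
  moreover have "(1::nat) \<le> 2^m" by simp
  ultimately show ?case by simp
qed

lemma dbl_exact: "finite S \<Longrightarrow> card S = Suc m \<Longrightarrow> dbl S \<Longrightarrow> Max S \<le> 2^m - 1
  \<Longrightarrow> S = (\<lambda>k. 2^k - 1) ` {..m}"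
proof (induction m arbitrary: S)
  case 0
  then obtain x where "S = {x}" by (auto simp: card_Suc_eq)
  then show ?case using 0 by simp
next
  case (Suc m)
  define S' where "S' = S - {Max S}"
  have ne: "S \<noteq> {}" using Suc.prems by auto
  have MS: "Max S \<in> S" using Max_in[OF Suc.prems(1) ne] .
  have cS': "card S' = Suc m" using Suc.prems MS unfolding S'_def by simp
  have fS': "finite S'" using Suc.prems unfolding S'_def by simp
  have dS': "dbl S'" using Suc.prems(3) unfolding dbl_def S'_def by blast
  have ne': "S' \<noteq> {}" using cS' by auto
  have M'in: "Max S' \<in> S'" using Max_in[OF fS' ne'] .
  then have "Max S' \<in> S" "Max S' \<noteq> Max S" unfolding S'_def by auto
  moreover have "Max S' \<le> Max S" using \<open>Max S' \<in> S\<close> Suc.prems(1) by simp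
  ultimately have lt: "Max S' < Max S" by simp
  have "2 * Max S' + 1 \<le> Max S" using Suc.prems(3) lt MS \<open>Max S' \<in> S\<close> unfolding dbl_def by blast
  moreover have lo: "2^m - 1 \<le> Max S'" using dbl_lower[OF fS' cS' dS'] .
  moreover have "(1::nat) \<le> 2^m" by simp
  ultimately have eq1: "Max S' \<le> 2^m - 1" and eq2: "Max S = 2^Suc m - 1" using Suc.prems(4) by auto
  have "S' = (\<lambda>k. 2^k - 1) ` {..m}" using Suc.IH[OF fS' cS' dS' eq1] .
  moreover have "S = insert (Max S) S'" using MS unfolding S'_def by auto
  moreover have "{..Suc m} = insert (Suc m) {..m}" by auto
  ultimately show ?case using eq2 by simp
qed

lemma free_sqfree: "free_from A (squares A) W \<Longrightarrow> sqfree W"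
  unfolding sqfree_def
proof (intro allI impI notI)
  fix Y assume f: "free_from A (squares A) W" and Y: "Y \<noteq> []" "subword (Y @ Y) W"
  obtain u v where "W = u @ (Y @ Y) @ v" using Y(2) unfolding subword_def by blast
  then have "set Y \<subseteq> set W" by auto
  then have "set Y \<subseteq> A" using f unfolding free_from_def by blast
  then have "Y @ Y \<in> squares A" using Y(1) unfolding squares_def by blast
  then show False using f Y(2) unfolding free_from_def by blast
qed

lemma crucial_suffix:
  assumes "crucial A (squares A) W" "b \<in> A"
  shows "\<exists>u Z. W = u @ Z @ [b] @ Z"
proof -
  have sq: "sqfree W" using assms(1) free_sqfree unfolding crucial_def by blast
  obtain Y where Y: "subword Y (W @ [b])" "Y \<in> squares A" using assms unfolding crucial_def by blast
  obtain X where X: "Y = X @ X" "X \<noteq> []" using Y(2) unfolding squares_def by blast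
  obtain u v where uv: "W @ [b] = u @ X @ X @ v" using Y(1) X(1) unfolding subword_def by auto
  have "v = []"
  proof (rule ccontr)
    assume "v \<noteq> []"
    then obtain v' x where "v = v' @ [x]" by (metis rev_exhaust)
    then have "W = u @ (X @ X) @ v'" using uv by simp
    then show False using sq X(2) unfolding sqfree_def subword_def by blast
  qed
  then have uv2: "W @ [b] = u @ X @ X" using uv by simp
  obtain Z x where Zx: "X = Z @ [x]" using X(2) by (metis rev_exhaust)
  then have "W @ [b] = (u @ Z @ [x] @ Z) @ [x]" using uv2 by simp
  then have "W = u @ Z @ [x] @ Z" "b = x" by auto
  then show ?thesis by blast
qed

lemma subwordI: "W = u @ Y @ v \<Longrightarrow> subword Y W"
  unfolding subword_def by blast

lemma zimin_crucial:
  assumes "inj_on a {1..n}"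
  shows "crucial (a ` {1..n}) (squares (a ` {1..n})) (zimin a n)"
  unfolding crucial_def free_from_def
proof (intro conjI allI impI ballI)
  show "set (zimin a n) \<subseteq> a ` {1..n}" by (simp add: zimin_set)
next
  fix Y assume "subword Y (zimin a n)"
  show "Y \<notin> squares (a ` {1..n})"
  proof (rule notI)
    assume "Y \<in> squares (a ` {1..n})"
    then obtain X where "Y = X @ X" "X \<noteq> []" unfolding squares_def by blast
    then show False using zimin_sqfree[OF assms] \<open>subword Y (zimin a n)\<close>
      unfolding sqfree_def by blast
  qed
next
  fix b assume "b \<in> a ` {1..n}"
  then obtain i where i: "i \<in> {1..n}" "b = a i" by auto
  then obtain j where j: "i = Suc j" "j < n" by (cases i) auto
  obtain u where u: "zimin a n = u @ zimin a i" using zimin_suffix[of i n a] i by auto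
  let ?X = "zimin a j @ [b]"
  have e: "zimin a i = zimin a j @ [b] @ zimin a j" using i(2) j(1) by (simp only: zimin.simps)
  have eq: "zimin a n @ [b] = u @ (?X @ ?X) @ []" unfolding u e by simp
  moreover have "?X @ ?X \<in> squares (a ` {1..n})"
  proof -
    have "a ` {1..j} \<subseteq> a ` {1..n}" using j by (intro image_mono) auto
    moreover have "b \<in> a ` {1..n}" using i by blast
    ultimately have "set ?X \<subseteq> a ` {1..n}" by (simp add: zimin_set)
    then show ?thesis unfolding squares_def by blast
  qed
  moreover have "subword (?X @ ?X) (zimin a n @ [b])" by (rule subwordI[OF eq])
  ultimately show "\<exists>Y. subword Y (zimin a n @ [b]) \<and> Y \<in> squares (a ` {1..n})"
    by blast
qed

lemma Pidx_aux:
  assumes uz: "W = u @ Z @ [b] @ Z" "length Z = m"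
  shows "W ! (length W - 1 - m) = b \<and> 2 * m + 1 \<le> length W"
proof -
  have l: "length W = length u + 2 * m + 1" unfolding uz(1) using uz(2) by simp
  have "(u @ Z @ [b] @ Z) ! (length u + length Z) = b" by (simp add: nth_append)
  then have i: "W ! (length u + m) = b" using uz by simp
  have idx: "length W - 1 - m = length u + m" using l by simp
  have "W ! (length W - 1 - m) = b" unfolding idx by (rule i)
  moreover have "2 * m + 1 \<le> length W" using l by simp
  ultimately show ?thesis by blast
qed



theorem mainTheorem2:
  fixes a :: "nat \<Rightarrow> 'a" and n :: nat and W :: "'a list"
  assumes "n \<ge> 1"
    and "inj_on a {1..n}"
    and "minimal_crucial (a ` {1..n}) (squares (a ` {1..n})) W"
  shows "\<exists>\<sigma>. bij_betw \<sigma> (a ` {1..n}) (a ` {1..n}) \<and> W = map \<sigma> (zimin a n)"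
proof -
  define A where "A = a ` {1..n}"
  have cr: "crucial A (squares A) W" and mn: "\<forall>Y. crucial A (squares A) Y \<longrightarrow> length W \<le> length Y"
    using assms(3) unfolding minimal_crucial_def A_def by auto
  have sq: "sqfree W" using cr free_sqfree unfolding crucial_def by blast
  define P where "P b m \<longleftrightarrow> (\<exists>u Z. W = u @ Z @ [b] @ Z \<and> length Z = m)" for b m
  have exP: "\<exists>m. P b m" if "b \<in> A" for b
    using crucial_suffix[OF cr that] unfolding P_def by blast
  define s where "s b = (SOME m. P b m)" for b
  have Ps: "P b (s b)" if "b \<in> A" for b
    unfolding s_def using someI_ex[OF exP[OF that]] .
  have Pidx: "W ! (length W - 1 - m) = b \<and> 2 * m + 1 \<le> length W" if Pbm: "P b m" for b m
  proof -
    obtain u Z where uz: "W = u @ Z @ [b] @ Z" "length Z = m" using Pbm unfolding P_def by auto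
    show ?thesis using Pidx_aux[OF uz] .
  qed
  have Pdbl: "2 * m + 1 \<le> m'" if Pb: "P b m" "P d m'" "m < m'" for b d m m'
  proof (rule ccontr)
    assume h: "\<not> 2 * m + 1 \<le> m'"
    obtain u Z where uz: "W = u @ Z @ [b] @ Z" "length Z = m" using Pb(1) unfolding P_def by auto
    obtain u' T where uT: "W = u' @ T @ [d] @ T" "length T = m'" using Pb(2) unfolding P_def by auto
    have l1: "length Z < length T" using uz(2) uT(2) Pb(3) by simp
    have l2: "length T \<le> 2 * length Z" using uz(2) uT(2) h by simp
    have "\<not> sqfree W" using key[OF uT(1) uz(1) l1 l2] .
    then show False using sq by blast
  qed
  have sinj: "inj_on s A"
  proof (rule inj_onI)
    fix x y assume "x \<in> A" "y \<in> A" "s x = s y"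
    have "W ! (length W - 1 - s x) = x" using Pidx[OF Ps[OF \<open>x \<in> A\<close>]] by blast
    moreover have "W ! (length W - 1 - s y) = y" using Pidx[OF Ps[OF \<open>y \<in> A\<close>]] by blast
    ultimately show "x = y" using \<open>s x = s y\<close> by simp
  qed
  have finA: "finite A" unfolding A_def by simp
  have cardA: "card A = n" unfolding A_def using card_image[OF assms(2)] by simp
  define S where "S = s ` A"
  have finS: "finite S" unfolding S_def using finA by simp
  have cardS: "card S = Suc (n - 1)" unfolding S_def using card_image[OF sinj] cardA assms(1) by simp
  have dS: "dbl S" unfolding dbl_def S_def
  proof (intro ballI impI)
    fix x y assume "x \<in> s ` A" "y \<in> s ` A" "x < y"
    then obtain b d where "b \<in> A" "d \<in> A" "x = s b" "y = s d" by blast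
    then show "2 * x + 1 \<le> y" using Pdbl[OF Ps[of b] Ps[of d]] \<open>x < y\<close> by simp
  qed
  have zc: "crucial A (squares A) (zimin a n)" unfolding A_def using zimin_crucial[OF assms(2)] .
  have "length W \<le> length (zimin a n)" using mn zc by blast
  then have lW: "length W \<le> 2^n - 1" by (simp add: zimin_len)
  have neS: "S \<noteq> {}" using cardS by auto
  obtain c where c: "c \<in> A" "s c = Max S" using Max_in[OF finS neS] unfolding S_def by auto
  have "2 * Max S + 1 \<le> length W" using Pidx[OF Ps[OF c(1)]] c(2) by simp
  define N where "N = (2::nat)^(n - 1)"
  have N1: "1 \<le> N" unfolding N_def by simp
  have "(2::nat)^n = 2^(Suc (n-1))" using assms(1) by simp
  also have "\<dots> = 2 * N" unfolding N_def by simp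
  finally have N2: "(2::nat)^n = 2 * N" .
  have MS: "Max S \<le> 2^(n-1) - 1" using \<open>2 * Max S + 1 \<le> length W\<close> lW N1 N2 unfolding N_def[symmetric] by linarith
  have Seq: "S = (\<lambda>k. 2^k - 1) ` {..n-1}" using dbl_exact[OF finS cardS dS MS] .
  have lo: "2^(n-1) - 1 \<le> Max S" using dbl_lower[OF finS cardS dS] .
  have lenW: "length W = 2^n - 1" using \<open>2 * Max S + 1 \<le> length W\<close> lW lo N1 N2 unfolding N_def[symmetric] by linarith
  have hit: "\<exists>b\<in>A. s b = 2^k - 1" if "k < n" for k
  proof -
    have "2^k - 1 \<in> S" using Seq that by auto
    then show ?thesis unfolding S_def by auto
  qed
  define \<sigma> where "\<sigma> j = W ! (length W - 2^(j-1))" for j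
  have \<sigma>prop: "\<sigma> j \<in> A \<and> s (\<sigma> j) = 2^(j-1) - 1" if jn: "j \<in> {1..n}" for j
  proof -
    have "j - 1 < n" using jn by auto
    then obtain b where b: "b \<in> A" "s b = 2^(j-1) - 1" using hit[of "j - 1"] by blast
    have "W ! (length W - 1 - (2^(j-1) - 1)) = b" using Pidx[OF Ps[OF b(1)]] b(2) by simp
    moreover have "(1::nat) \<le> 2^(j-1)" by simp
    then have "length W - 1 - (2^(j-1) - 1) = length W - 2^(j-1)" by linarith
    ultimately have "\<sigma> j = b" unfolding \<sigma>_def by simp
    then show ?thesis using b by simp
  qed
  have \<sigma>inj: "inj_on \<sigma> {1..n}"
  proof (rule inj_onI)
    fix i j assume ij: "i \<in> {1..n}" "j \<in> {1..n}" "\<sigma> i = \<sigma> j"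
    then have "(2::nat)^(i-1) - 1 = 2^(j-1) - 1" using \<sigma>prop[of i] \<sigma>prop[of j] by simp
    moreover have "(1::nat) \<le> 2^(i-1)" "(1::nat) \<le> 2^(j-1)" by simp_all
    ultimately have "(2::nat)^(i-1) = 2^(j-1)" by linarith
    then have "i - 1 = j - 1" by simp
    then show "i = j" using ij by auto
  qed
  have \<sigma>img: "\<sigma> ` {1..n} = A"
  proof (rule card_subset_eq[OF finA])
    show "\<sigma> ` {1..n} \<subseteq> A" using \<sigma>prop by auto
    show "card (\<sigma> ` {1..n}) = card A" using card_image[OF \<sigma>inj] cardA by simp
  qed
  have struct: "drop (length W - (2^k - 1)) W = zimin \<sigma> k" if "k \<le> n" for k
    using that
  proof (induction k)
    case 0
    then show ?case by simp
  next
    case (Suc k)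
    have jin: "Suc k \<in> {1..n}" using Suc.prems by simp
    let ?b = "\<sigma> (Suc k)"
    have "P ?b (2^k - 1)" using Ps[of ?b] \<sigma>prop[OF jin] by simp
    then obtain u Z where uz: "W = u @ Z @ [?b] @ Z" "length Z = 2^k - 1" unfolding P_def by auto
    have k1: "(1::nat) \<le> 2^k" by simp
    have l: "length W = length u + 2 * length Z + 1" unfolding uz(1) by simp
    have d1: "length W - (2^k - 1) = length u + length Z + 1" using l uz(2) k1 by linarith
    have "drop (length u + length Z + 1) W = Z" using uz(1) by simp
    then have Zeq: "Z = zimin \<sigma> k" using Suc.IH Suc.prems d1 by simp
    have pk: "(2::nat)^Suc k = 2 * 2^k" by simp
    have d2: "length W - (2^Suc k - 1) = length u" using l uz(2) k1 pk by linarith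
    have "drop (length u) W = Z @ [?b] @ Z" using uz(1) by simp
    then show ?case using d2 Zeq by simp
  qed
  have Wz: "W = zimin \<sigma> n" using struct[of n] lenW by simp
  define \<tau> where "\<tau> x = \<sigma> (the_inv_into {1..n} a x)" for x
  have \<tau>a: "\<tau> (a i) = \<sigma> i" if "i \<in> {1..n}" for i
    unfolding \<tau>_def using the_inv_into_f_f[OF assms(2) that] by simp
  have img: "\<tau> ` A = A"
  proof -
    have "\<tau> ` A = (\<tau> \<circ> a) ` {1..n}" unfolding A_def by (simp add: image_comp)
    also have "\<dots> = \<sigma> ` {1..n}" using \<tau>a by (intro image_cong) auto
    finally show ?thesis using \<sigma>img by simp
  qed
  have inj\<tau>: "inj_on \<tau> A"
  proof (rule inj_onI)
    fix x y assume "x \<in> A" "y \<in> A" "\<tau> x = \<tau> y"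
    then obtain i j where "i \<in> {1..n}" "j \<in> {1..n}" "x = a i" "y = a j" unfolding A_def by blast
    then have "\<sigma> i = \<sigma> j" using \<open>\<tau> x = \<tau> y\<close> \<tau>a by simp
    then have "i = j" using inj_onD[OF \<sigma>inj] \<open>i \<in> {1..n}\<close> \<open>j \<in> {1..n}\<close> by blast
    then show "x = y" using \<open>x = a i\<close> \<open>y = a j\<close> by simp
  qed
  have "map \<tau> (zimin a n) = zimin \<sigma> n"
    unfolding zimin_map using \<tau>a by (intro zimin_cong) simp
  then have "bij_betw \<tau> A A \<and> W = map \<tau> (zimin a n)"
    using img inj\<tau> Wz unfolding bij_betw_def by simp
  then show ?thesis unfolding A_def by blast
qed

end
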